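(* There is an absolute constant $C>0$ such that the following holds. Let $n \geq 4$ be even and let $\mathcal{G}=\{G_t : t\in\mathbb{N}\}$ be an evolving graph on node set $[n]$. Suppose there exist an increasing sequence of reals $1=h_0\leq h_1<\dots<h_s=n/2$ and a non-increasing sequence of positive reals $k_1\geq\dots\geq k_s$ such that for every $t\in\mathbb{N}$ and every $i=1,\dots,s$ the graph $G_t$ is an $(h_i,k_i)$-expander. Then the flooding time of $\mathcal{G}$ is at most $$C\sum_{i=1}^s \frac{\log(h_i/h_{i-1})}{\log(1+k_i)}.$$
   Context: Logarithms are natural. An evolving graph is a sequence $\{G_t:t\in\mathbb{N}\}$ of graphs all on the node set $[n]=\{1,\dots,n\}$. For a graph $G=([n],E)$ and $I\subseteq[n]$, $N(I)=\{v\in[n]\setminus I : \{u,v\}\in E \text{ for some } u\in I\}$. $G$ is an $(h,k)$-expander if every $I\subseteq[n]$ with $|I|\leq h$ satisfies $|N(I)|\geq k|I|$. Flooding from a source $s\in[n]$: $I_0=\{s\}$, $I_{t+1}=I_t\cup N_t(I_t)$, where $N_t$ is the out-neighborhood in $G_t$. $T(s)$ is the first $t$ with $I_t=[n]$, and the flooding time of $\mathcal{G}$ is $\max_{s\in[n]}T(s)$. *)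

theory Defs
  imports Complex_Main
begin

definition is_graph :: "nat \<Rightarrow> nat set set \<Rightarrow> bool" where
  "is_graph n E \<longleftrightarrow> (\<forall>e\<in>E. \<exists>u v. e = {u, v} \<and> u \<noteq> v \<and> u \<in> {1..n} \<and> v \<in> {1..n})"

definition evolving_graph :: "nat \<Rightarrow> (nat \<Rightarrow> nat set set) \<Rightarrow> bool" where
  "evolving_graph n G \<longleftrightarrow> (\<forall>t. is_graph n (G t))"

definition nbhd :: "nat \<Rightarrow> nat set set \<Rightarrow> nat set \<Rightarrow> nat set" where
  "nbhd n E I = {v \<in> {1..n} - I. \<exists>u\<in>I. {u, v} \<in> E}"

definition expander :: "nat \<Rightarrow> nat set set \<Rightarrow> real \<Rightarrow> real \<Rightarrow> bool" where
  "expander n E h k \<longleftrightarrow>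
     (\<forall>I. I \<subseteq> {1..n} \<and> real (card I) \<le> h \<longrightarrow> real (card (nbhd n E I)) \<ge> k * real (card I))"

primrec flood :: "nat \<Rightarrow> (nat \<Rightarrow> nat set set) \<Rightarrow> nat \<Rightarrow> nat \<Rightarrow> nat set" where
  "flood n G s 0 = {s}"
| "flood n G s (Suc t) = flood n G s t \<union> nbhd n (G t) (flood n G s t)"

definition flood_T :: "nat \<Rightarrow> (nat \<Rightarrow> nat set set) \<Rightarrow> nat \<Rightarrow> nat" where
  "flood_T n G s = (LEAST t. flood n G s t = {1..n})"

definition flooding_time_le :: "nat \<Rightarrow> (nat \<Rightarrow> nat set set) \<Rightarrow> real \<Rightarrow> bool" where
  "flooding_time_le n G b \<longleftrightarrow>
     (\<forall>s\<in>{1..n}. (\<exists>t. flood n G s t = {1..n}) \<and> real (flood_T n G s) \<le> b)"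

end

theory Submission
  imports Defs
begin


primrec floodS :: "nat \<Rightarrow> (nat \<Rightarrow> nat set set) \<Rightarrow> nat set \<Rightarrow> nat \<Rightarrow> nat set" where
  "floodS n G A 0 = A"
| "floodS n G A (Suc t) = floodS n G A t \<union> nbhd n (G t) (floodS n G A t)"

lemma flood_eq: "flood n G s t = floodS n G {s} t"
  by (induction t) auto

lemma un_nbhd: "I \<union> nbhd n E I = I \<union> {v \<in> {1..n}. \<exists>u\<in>I. {u,v} \<in> E}"
  unfolding nbhd_def by auto

lemma floodS_mono: "A \<subseteq> B \<Longrightarrow> floodS n G A t \<subseteq> floodS n G B t"
proof (induction t)
  case 0 then show ?case by simp
next
  case (Suc t)
  then show ?case by (simp only: floodS.simps un_nbhd) blast
qed

lemma floodS_sub: "A \<subseteq> {1..n} \<Longrightarrow> floodS n G A t \<subseteq> {1..n}"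
  by (induction t) (auto simp: nbhd_def)

lemma floodS_incr: "t \<le> t' \<Longrightarrow> floodS n G A t \<subseteq> floodS n G A t'"
  by (induction t' rule: dec_induct) auto

lemma floodS_cong: "(\<forall>j<t. G j = G' j) \<Longrightarrow> floodS n G A t = floodS n G' A t"
  by (induction t) auto

lemma floodS_shift: "floodS n G A (a+b) = floodS n (\<lambda>j. G(a+j)) (floodS n G A a) b"
  by (induction b) auto

lemma floodS_rev:
  assumes "v \<in> {1..n}" "w \<in> floodS n (\<lambda>j. G (m - 1 - j)) {v} m"
  shows "v \<in> floodS n G {w} m"
  using assms
proof (induction m arbitrary: G w)
  case 0 then show ?case by simp
next
  case (Suc m)
  define G' where "G' = (\<lambda>j. G (Suc j))"
  have eqF: "floodS n (\<lambda>j. G (Suc m - 1 - j)) {v} m = floodS n (\<lambda>j. G' (m - 1 - j)) {v} m"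
    by (rule floodS_cong) (simp add: G'_def Suc_diff_Suc)
  have key: "floodS n G' {u} m \<subseteq> floodS n G {w} (Suc m)" if "u \<in> floodS n G {w} 1" for u
  proof -
    have "floodS n G {w} (Suc m) = floodS n G {w} (1 + m)" by simp
    also have "\<dots> = floodS n G' (floodS n G {w} 1) m" unfolding floodS_shift G'_def by simp
    finally show ?thesis using floodS_mono[of "{u}" "floodS n G {w} 1" n G' m] that by auto
  qed
  let ?F = "floodS n (\<lambda>j. G (Suc m - 1 - j)) {v} m"
  have Fsub: "?F \<subseteq> {1..n}" using Suc.prems(1) by (intro floodS_sub) auto
  have "w \<in> ?F \<union> nbhd n (G 0) ?F" using Suc.prems(2) by simp
  then show ?case
  proof
    assume "w \<in> ?F"
    then have "v \<in> floodS n G' {w} m" using Suc.IH[of w G'] Suc.prems(1) eqF by simp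
    moreover have "w \<in> floodS n G {w} 1" by simp
    ultimately show ?thesis using key by blast
  next
    assume "w \<in> nbhd n (G 0) ?F"
    then obtain u where u: "u \<in> ?F" "{u,w} \<in> G 0" "w \<in> {1..n}" "w \<notin> ?F"
      unfolding nbhd_def by auto
    then have "v \<in> floodS n G' {u} m" using Suc.IH[of u G'] Suc.prems(1) eqF by simp
    moreover have "u \<in> floodS n G {w} 1"
      using u Fsub by (auto simp: nbhd_def insert_commute)
    ultimately show ?thesis using key by blast
  qed
qed



definition clip :: "(nat \<Rightarrow> real) \<Rightarrow> nat \<Rightarrow> real \<Rightarrow> real" where
  "clip h j x = max (h (j - 1)) (min x (h j))"

definition Phi :: "(nat \<Rightarrow> real) \<Rightarrow> (nat \<Rightarrow> real) \<Rightarrow> nat \<Rightarrow> real \<Rightarrow> real" where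
  "Phi h k s x = (\<Sum>j=1..s. (ln (clip h j x) - ln (h (j-1))) / ln (1 + k j))"

locale phases =
  fixes h k :: "nat \<Rightarrow> real" and s :: nat
  assumes hm: "\<And>i j. i \<le> j \<Longrightarrow> j \<le> s \<Longrightarrow> h i \<le> h j"
    and h0: "h 0 = 1"
    and km: "\<And>i j. 1 \<le> i \<Longrightarrow> i \<le> j \<Longrightarrow> j \<le> s \<Longrightarrow> k j \<le> k i"
    and kp: "\<And>i. 1 \<le> i \<Longrightarrow> i \<le> s \<Longrightarrow> 0 < k i"
begin

lemma hpos: "j \<le> s \<Longrightarrow> h j \<ge> 1" using hm[of 0 j] h0 by simp

lemma clip_ge: "1 \<le> j \<Longrightarrow> j \<le> s \<Longrightarrow> clip h j x \<ge> 1"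
  using hpos[of "j-1"] unfolding clip_def by (simp add: le_max_iff_disj)

lemma clip_mono: "x \<le> y \<Longrightarrow> clip h j x \<le> clip h j y"
  unfolding clip_def by auto

lemma tele: "m \<le> s \<Longrightarrow> (\<Sum>j=1..m. ln (clip h j y) - ln (h (j-1))) = ln (min (max y (h 0)) (h m)) - ln (h 0)"
proof (induction m)
  case 0 then show ?case by simp
next
  case (Suc m)
  have a: "h m \<le> h (Suc m)" "h 0 \<le> h m" using Suc.prems hm by auto
  have IH: "(\<Sum>j=1..m. ln (clip h j y) - ln (h (j-1))) = ln (min (max y (h 0)) (h m)) - ln (h 0)"
    using Suc by simp
  have "(\<Sum>j=1..Suc m. ln (clip h j y) - ln (h (j-1))) =
     (\<Sum>j=1..m. ln (clip h j y) - ln (h (j-1))) + (ln (clip h (Suc m) y) - ln (h m))"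
    by simp
  also have "\<dots> = ln (min (max y (h 0)) (h (Suc m))) - ln (h 0)"
  proof (cases "y \<le> h m")
    case True
    then have "clip h (Suc m) y = h m" "min (max y (h 0)) (h m) = max y (h 0)"
      "min (max y (h 0)) (h (Suc m)) = max y (h 0)"
      unfolding clip_def using a by auto
    then show ?thesis unfolding IH by simp
  next
    case False
    then have "clip h (Suc m) y = min y (h (Suc m))" "min (max y (h 0)) (h m) = h m"
      "min (max y (h 0)) (h (Suc m)) = min y (h (Suc m))"
      unfolding clip_def using a by auto
    then show ?thesis unfolding IH by simp
  qed
  finally show ?case .
qed

lemma diff: assumes "h 0 \<le> x" "x \<le> y" "y \<le> h s"
  shows "(\<Sum>j=1..s. ln (clip h j y) - ln (clip h j x)) = ln y - ln x"
proof -
  have "(\<Sum>j=1..s. ln (clip h j y) - ln (clip h j x)) =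
     (\<Sum>j=1..s. ln (clip h j y) - ln (h (j-1))) - (\<Sum>j=1..s. ln (clip h j x) - ln (h (j-1)))"
    by (simp add: sum_subtractf)
  also have "\<dots> = ln y - ln x" using tele[of s y] tele[of s x] assms by simp
  finally show ?thesis .
qed

lemma key: assumes i: "1 \<le> i" "i \<le> s" "x \<le> h i" and lt: "\<And>j. 1 \<le> j \<Longrightarrow> j < i \<Longrightarrow> h j < x"
  and xy: "h 0 \<le> x" "x \<le> y" "y \<le> h s"
  shows "Phi h k s y - Phi h k s x \<ge> (ln y - ln x) / ln (1 + k i)"
proof -
  have "Phi h k s y - Phi h k s x = (\<Sum>j=1..s. (ln (clip h j y) - ln (clip h j x)) / ln (1 + k j))"
    unfolding Phi_def sum_subtractf[symmetric] by (rule sum.cong) (simp_all add: diff_divide_distrib)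
  moreover have "(ln y - ln x) / ln (1 + k i) = (\<Sum>j=1..s. (ln (clip h j y) - ln (clip h j x)) / ln (1 + k i))"
    by (subst sum_divide_distrib[symmetric]) (use diff[OF xy] in simp)
  moreover have "(\<Sum>j=1..s. (ln (clip h j y) - ln (clip h j x)) / ln (1 + k i))
      \<le> (\<Sum>j=1..s. (ln (clip h j y) - ln (clip h j x)) / ln (1 + k j))"
  proof (rule sum_mono)
    fix j assume j: "j \<in> {1..s}"
    show "(ln (clip h j y) - ln (clip h j x)) / ln (1 + k i) \<le> (ln (clip h j y) - ln (clip h j x)) / ln (1 + k j)"
    proof (cases "j < i")
      case True
      then have "h j < x" using lt j by auto
      moreover have "h (j-1) \<le> h j" using j hm by auto
      ultimately have "clip h j x = h j" "clip h j y = h j" using xy unfolding clip_def by auto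
      then show ?thesis by simp
    next
      case False
      have "clip h j x \<le> clip h j y" using clip_mono xy by auto
      moreover have "clip h j x \<ge> 1" using clip_ge j by auto
      ultimately have d: "0 \<le> ln (clip h j y) - ln (clip h j x)" by simp
      have "k j \<le> k i" using km[of i j] False i j by auto
      moreover have "0 < k j" using kp j by auto
      ultimately have "ln (1 + k j) \<le> ln (1 + k i)" "0 < ln (1 + k j)" by auto
      then show ?thesis using d by (intro divide_left_mono) (auto intro: mult_pos_pos)
    qed
  qed
  ultimately show ?thesis by simp
qed

lemma Phi_mono: assumes "x \<le> y" shows "Phi h k s x \<le> Phi h k s y"
  unfolding Phi_def
proof (rule sum_mono)
  fix j assume j: "j \<in> {1..s}"
  have "clip h j x \<le> clip h j y" using clip_mono assms by auto
  moreover have "clip h j x \<ge> 1" using clip_ge j by auto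
  ultimately have "ln (clip h j x) \<le> ln (clip h j y)" by simp
  moreover have "0 < k j" using kp j by auto
  then have "0 < ln (1 + k j)" by simp
  ultimately show "(ln (clip h j x) - ln (h (j - 1))) / ln (1 + k j) \<le> (ln (clip h j y) - ln (h (j - 1))) / ln (1 + k j)"
    by (intro divide_right_mono) auto
qed

lemma Phi_h0: "Phi h k s (h 0) = 0"
  unfolding Phi_def
proof (rule sum.neutral, rule ballI)
  fix j assume j: "j \<in> {1..s}"
  have "h 0 \<le> h (j-1)" "h (j-1) \<le> h j" using hm j by auto
  then have "clip h j (h 0) = h (j-1)" unfolding clip_def by auto
  then show "(ln (clip h j (h 0)) - ln (h (j - 1))) / ln (1 + k j) = 0" by simp
qed

lemma Phi_hs: "Phi h k s (h s) = (\<Sum>j=1..s. ln (h j / h (j-1)) / ln (1 + k j))"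
  unfolding Phi_def
proof (rule sum.cong[OF refl])
  fix j assume j: "j \<in> {1..s}"
  have "h j \<le> h s" "h (j-1) \<le> h j" using hm j by auto
  then have "clip h j (h s) = h j" unfolding clip_def by auto
  moreover have "h j > 0" "h (j-1) > 0" using hpos[of j] hpos[of "j-1"] j by force+
  ultimately show "(ln (clip h j (h s)) - ln (h (j - 1))) / ln (1 + k j) = ln (h j / h (j-1)) / ln (1 + k j)"
    by (simp add: ln_div)
qed

lemma phase_ex: assumes "1 \<le> s" "x \<le> h s"
  shows "\<exists>i. 1 \<le> i \<and> i \<le> s \<and> x \<le> h i \<and> (\<forall>j. 1 \<le> j \<and> j < i \<longrightarrow> h j < x)"
proof -
  define P where "P i = (1 \<le> i \<and> x \<le> h i)" for i
  have Ps: "P s" using assms P_def by auto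
  let ?i = "Least P"
  have "P ?i" using LeastI[of P s] Ps .
  moreover have "?i \<le> s" using Least_le[of P s] Ps .
  moreover have "\<forall>j. 1 \<le> j \<and> j < ?i \<longrightarrow> h j < x"
  proof (intro allI impI)
    fix j assume "1 \<le> j \<and> j < ?i"
    then have "\<not> P j" "1 \<le> j" using not_less_Least[of j P] by auto
    then show "h j < x" unfolding P_def by simp
  qed
  ultimately show ?thesis unfolding P_def by blast
qed

lemma forward:
  assumes s1: "s \<ge> 1" and hs: "h s = real n / 2"
    and ex: "\<forall>t. \<forall>i\<in>{1..s}. expander n (G t) (h i) (k i)" and v: "v \<in> {1..n}"
  shows "real (card (floodS n G {v} (nat \<lfloor>Phi h k s (h s)\<rfloor> + 1))) > real n / 2"
proof -
  define x where "x m = real (card (floodS n G {v} m))" for m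
  have sub: "floodS n G {v} m \<subseteq> {1..n}" for m using v by (intro floodS_sub) auto
  have fin: "finite (floodS n G {v} m)" for m using sub finite_subset by blast
  have x1: "x m \<ge> 1" for m
  proof -
    have "v \<in> floodS n G {v} m" using floodS_incr[of 0 m n G "{v}"] by auto
    then have "card (floodS n G {v} m) > 0" using fin card_gt_0_iff by blast
    then show ?thesis unfolding x_def by simp
  qed
  have xmono: "m \<le> m' \<Longrightarrow> x m \<le> x m'" for m m'
  proof -
    assume "m \<le> m'"
    then have "floodS n G {v} m \<subseteq> floodS n G {v} m'" by (rule floodS_incr)
    then have "card (floodS n G {v} m) \<le> card (floodS n G {v} m')" using card_mono fin by blast
    then show ?thesis unfolding x_def by simp
  qed
  have claim: "(\<forall>j\<le>m. x j \<le> real n / 2) \<longrightarrow> real m \<le> Phi h k s (x m)" for m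
  proof (induction m)
    case 0
    have "x 0 = h 0" unfolding x_def using h0 by simp
    then show ?case using Phi_h0 by simp
  next
    case (Suc m)
    show ?case
    proof
      assume A: "\<forall>j\<le>Suc m. x j \<le> real n / 2"
      then have IH: "real m \<le> Phi h k s (x m)" using Suc by auto
      have "x m \<le> real n / 2" using A by simp
      then have xm: "x m \<le> h s" using hs by simp
      obtain i where i: "1 \<le> i" "i \<le> s" "x m \<le> h i" "\<forall>j. 1 \<le> j \<and> j < i \<longrightarrow> h j < x m"
        using phase_ex[OF s1 xm] by blast
      let ?I = "floodS n G {v} m"
      have "expander n (G m) (h i) (k i)" using ex i by auto
      then have nb: "real (card (nbhd n (G m) ?I)) \<ge> k i * x m"
        unfolding expander_def x_def using sub i(3) x_def by auto
      have disj: "?I \<inter> nbhd n (G m) ?I = {}" unfolding nbhd_def by auto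
      have finN: "finite (nbhd n (G m) ?I)" unfolding nbhd_def by auto
      have "x (Suc m) = x m + real (card (nbhd n (G m) ?I))"
        unfolding x_def using card_Un_disjoint[OF fin finN disj] by simp
      then have xs: "x (Suc m) \<ge> x m * (1 + k i)" using nb by (simp add: algebra_simps)
      have kpos: "0 < k i" using kp i by auto
      have lnp: "0 < ln (1 + k i)" using kpos by simp
      have "ln (x (Suc m)) \<ge> ln (x m * (1 + k i))"
        using xs x1[of m] x1[of "Suc m"] kpos by (subst ln_le_cancel_iff) auto
      also have "ln (x m * (1 + k i)) = ln (x m) + ln (1 + k i)"
        using x1[of m] kpos by (simp add: ln_mult)
      finally have "(ln (x (Suc m)) - ln (x m)) / ln (1 + k i) \<ge> 1"
        using lnp by simp
      moreover have "Phi h k s (x (Suc m)) - Phi h k s (x m) \<ge> (ln (x (Suc m)) - ln (x m)) / ln (1 + k i)"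
        proof (rule key[OF i(1) i(2) i(3)])
        show "\<And>j. 1 \<le> j \<Longrightarrow> j < i \<Longrightarrow> h j < x m" using i(4) by blast
        show "h 0 \<le> x m" using x1[of m] h0 by simp
        show "x m \<le> x (Suc m)" using xmono[of m "Suc m"] by simp
        have "x (Suc m) \<le> real n / 2" using A by blast
        then show "x (Suc m) \<le> h s" using hs by simp
      qed
      ultimately show "real (Suc m) \<le> Phi h k s (x (Suc m))" using IH by simp
    qed
  qed
  define S where "S = Phi h k s (h s)"
  have S0: "S \<ge> 0" using Phi_mono[of "h 0" "h s"] Phi_h0 hm[of 0 s] S_def by auto
  define M where "M = nat \<lfloor>S\<rfloor> + 1"
  have MS: "real M > S" unfolding M_def using S0 by linarith
  show ?thesis
  proof (rule ccontr)
    assume "\<not> ?thesis"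
    then have "x M \<le> real n / 2" unfolding x_def M_def S_def by simp
    then have "\<forall>j\<le>M. x j \<le> real n / 2"
    proof (intro allI impI)
      fix j assume "j \<le> M" "x M \<le> real n / 2"
      then show "x j \<le> real n / 2" using xmono[of j M] by linarith
    qed
    then have "real M \<le> Phi h k s (x M)" using claim by blast
    also have "\<dots> \<le> S" unfolding S_def using Phi_mono \<open>x M \<le> real n / 2\<close> hs by auto
    finally show False using MS by simp
  qed
qed

end


lemma chain_h:
  fixes h :: "nat \<Rightarrow> real"
  assumes h01: "h 0 \<le> h 1" and inc: "\<forall>i. 1 \<le> i \<and> i < s \<longrightarrow> h i < h (i+1)"
    and ij: "i \<le> j" and js: "j \<le> s"
  shows "h i \<le> h j"
  using ij js
proof (induction j rule: dec_induct)
  case base then show ?case by simp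
next
  case (step m)
  have "h m \<le> h (Suc m)"
  proof (cases "m = 0")
    case True then show ?thesis using h01 by simp
  next
    case False then have "1 \<le> m \<and> m < s" using step.prems by simp
    then show ?thesis using inc by fastforce
  qed
  then show ?case using step by simp
qed

lemma chain_k:
  fixes k :: "nat \<Rightarrow> real"
  assumes dec: "\<forall>i. 1 \<le> i \<and> i < s \<longrightarrow> k (i + 1) \<le> k i"
    and i1: "1 \<le> i" and ij: "i \<le> j" and js: "j \<le> s"
  shows "k j \<le> k i"
  using ij js
proof (induction j rule: dec_induct)
  case base then show ?case by simp
next
  case (step m)
  have "1 \<le> m \<and> m < s" using step i1 by simp
  then have "k (Suc m) \<le> k m" using dec by fastforce
  then show ?case using step by simp
qed

theorem mainTheorem1:
  shows "\<exists>C::real. C > 0 \<and>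
    (\<forall>(n::nat) (G::nat \<Rightarrow> nat set set) (s::nat) (h::nat \<Rightarrow> real) (k::nat \<Rightarrow> real).
      n \<ge> 4 \<and> even n \<and> evolving_graph n G \<and>
      h 0 = 1 \<and> h 0 \<le> h 1 \<and> (\<forall>i. 1 \<le> i \<and> i < s \<longrightarrow> h i < h (i + 1)) \<and> h s = real n / 2 \<and>
      (\<forall>i\<in>{1..s}. k i > 0) \<and> (\<forall>i. 1 \<le> i \<and> i < s \<longrightarrow> k (i + 1) \<le> k i) \<and>
      (\<forall>t. \<forall>i\<in>{1..s}. expander n (G t) (h i) (k i))
      \<longrightarrow> flooding_time_le n G (C * (\<Sum>i=1..s. ln (h i / h (i - 1)) / ln (1 + k i))))"
proof (rule exI[of _ 6], intro conjI allI impI)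
  show "(0::real) < 6" by simp
  fix n :: nat and G :: "nat \<Rightarrow> nat set set" and s :: nat and h k :: "nat \<Rightarrow> real"
  assume A: "n \<ge> 4 \<and> even n \<and> evolving_graph n G \<and>
      h 0 = 1 \<and> h 0 \<le> h 1 \<and> (\<forall>i. 1 \<le> i \<and> i < s \<longrightarrow> h i < h (i + 1)) \<and> h s = real n / 2 \<and>
      (\<forall>i\<in>{1..s}. k i > 0) \<and> (\<forall>i. 1 \<le> i \<and> i < s \<longrightarrow> k (i + 1) \<le> k i) \<and>
      (\<forall>t. \<forall>i\<in>{1..s}. expander n (G t) (h i) (k i))"
  then have n4: "n \<ge> 4" and h0: "h 0 = 1" and h01: "h 0 \<le> h 1"
    and hinc: "\<forall>i. 1 \<le> i \<and> i < s \<longrightarrow> h i < h (i + 1)" and hs: "h s = real n / 2"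
    and kp: "\<forall>i\<in>{1..s}. k i > 0" and kdec: "\<forall>i. 1 \<le> i \<and> i < s \<longrightarrow> k (i + 1) \<le> k i"
    and ex: "\<forall>t. \<forall>i\<in>{1..s}. expander n (G t) (h i) (k i)"
    by blast+
  have ph: "phases h k s"
  proof
    show "\<And>i j. i \<le> j \<Longrightarrow> j \<le> s \<Longrightarrow> h i \<le> h j" using chain_h[OF h01 hinc] by blast
    show "h 0 = 1" by (rule h0)
    show "\<And>i j. 1 \<le> i \<Longrightarrow> i \<le> j \<Longrightarrow> j \<le> s \<Longrightarrow> k j \<le> k i" using chain_k[OF kdec] by blast
    show "\<And>i. 1 \<le> i \<Longrightarrow> i \<le> s \<Longrightarrow> 0 < k i" using kp by auto
  qed
  interpret phases h k s by (rule ph)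
  have s1: "s \<ge> 1"
  proof (rule ccontr)
    assume "\<not> s \<ge> 1"
    then have "s = 0" by simp
    then show False using h0 hs n4 by simp
  qed
  define S where "S = (\<Sum>i=1..s. ln (h i / h (i - 1)) / ln (1 + k i))"
  have PS: "Phi h k s (h s) = S" unfolding S_def by (rule Phi_hs)
  define M where "M = nat \<lfloor>S\<rfloor> + 1"
  have fw: "real (card (floodS n H {v} M)) > real n / 2"
    if "\<forall>t. \<forall>i\<in>{1..s}. expander n (H t) (h i) (k i)" "v \<in> {1..n}" for H v
    using forward[OF s1 hs that] unfolding PS M_def .
  have S2: "S \<ge> 1/2"
  proof -
    have "Phi h k s (h s) - Phi h k s (h 0) \<ge> (ln (h s) - ln (h 0)) / ln (1 + k 1)"
      using key[of 1 "h 0" "h s"] s1 h01 hm[of 0 s] by auto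
    then have S1: "S \<ge> ln (real n / 2) / ln (1 + k 1)" using PS Phi_h0 h0 hs by simp
    have k1: "0 < k 1" using kp s1 by auto
    have "expander n (G 0) (h 1) (k 1)" using ex s1 by auto
    moreover have "{1::nat} \<subseteq> {1..n}" using n4 by auto
    moreover have "real (card {1::nat}) \<le> h 1" using h01 h0 by simp
    ultimately have "real (card (nbhd n (G 0) {1})) \<ge> k 1 * real (card {1::nat})"
      unfolding expander_def by blast
    moreover have "nbhd n (G 0) {1} \<subseteq> {1..n} - {1}" unfolding nbhd_def by auto
    then have "card (nbhd n (G 0) {1}) \<le> card ({1..n} - {1::nat})" by (intro card_mono) auto
    moreover have "card ({1..n} - {1::nat}) = n - 1" using n4 by simp
    ultimately have "k 1 \<le> real (n - 1)" by simp
    then have "1 + k 1 \<le> real n" using n4 by simp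
    then have l1: "ln (1 + k 1) \<le> ln (real n)" using k1 by simp
    have l0: "0 < ln (1 + k 1)" using k1 by simp
    have "ln 4 \<le> ln (real n)" using n4 by simp
    moreover have "ln (4::real) = 2 * ln 2" using ln_mult[of 2 2] by simp
    moreover have "ln (real n / 2) = ln (real n) - ln 2" using n4 by (simp add: ln_div)
    ultimately have "ln (real n / 2) \<ge> ln (1 + k 1) / 2" using l1 by linarith
    then have "ln (real n / 2) / ln (1 + k 1) \<ge> 1/2" using l0 by (simp add: le_divide_eq)
    then show ?thesis using S1 by linarith
  qed
  have MS: "real M \<le> S + 1" unfolding M_def using S2 by linarith
  show "flooding_time_le n G (6 * S)"
    unfolding flooding_time_le_def
  proof (intro ballI conjI)
    fix v assume v: "v \<in> {1..n}"
    define F where "F = floodS n G {v} M"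
    have cF: "real (card F) > real n / 2" unfolding F_def using fw[OF ex v] .
    have Fsub: "F \<subseteq> {1..n}" unfolding F_def using v by (intro floodS_sub) auto
    have full: "flood n G v (M + M) = {1..n}"
    proof
      show "flood n G v (M + M) \<subseteq> {1..n}" unfolding flood_eq using v by (intro floodS_sub) auto
    next
      show "{1..n} \<subseteq> flood n G v (M + M)"
      proof
        fix u assume u: "u \<in> {1..n}"
        define G2 where "G2 = (\<lambda>j. G (M + j))"
        define Hr where "Hr = (\<lambda>j. G2 (M - 1 - j))"
        have exH: "\<forall>t. \<forall>i\<in>{1..s}. expander n (Hr t) (h i) (k i)"
          unfolding Hr_def G2_def using ex by blast
        define B where "B = floodS n Hr {u} M"
        have cB: "real (card B) > real n / 2" unfolding B_def using fw[OF exH u] .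
        have Bsub: "B \<subseteq> {1..n}" unfolding B_def using u by (intro floodS_sub) auto
        have "F \<inter> B \<noteq> {}"
        proof
          assume d: "F \<inter> B = {}"
          have fF: "finite F" "finite B" using Fsub Bsub finite_subset by blast+
          have "card (F \<union> B) = card F + card B" using card_Un_disjoint[OF fF d] .
          moreover have "card (F \<union> B) \<le> card {1..n}" using Fsub Bsub by (intro card_mono) auto
          ultimately have "real (card F) + real (card B) \<le> real n" by simp
          then show False using cF cB by linarith
        qed
        then obtain w where w: "w \<in> F" "w \<in> B" by blast
        have "u \<in> floodS n G2 {w} M"
          using floodS_rev[of u n w G2 M] u w(2) unfolding B_def Hr_def by simp
        also have "\<dots> \<subseteq> floodS n G2 F M" using w(1) by (intro floodS_mono) auto
        also have "\<dots> = floodS n G {v} (M + M)" unfolding F_def G2_def floodS_shift ..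
        finally show "u \<in> flood n G v (M + M)" unfolding flood_eq .
      qed
    qed
    then show "\<exists>t. flood n G v t = {1..n}" by blast
    have "flood_T n G v \<le> M + M" unfolding flood_T_def using full by (rule Least_le)
    then have "real (flood_T n G v) \<le> 2 * real M" by simp
    also have "\<dots> \<le> 6 * S" using MS S2 by linarith
    finally show "real (flood_T n G v) \<le> 6 * S" .
  qed
qed


end
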